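(* Assume the Setting and let $(\xi_n,x_n)$ be generated by Algorithm 2 with $0<\mu_0<4\sigma(1-\eta)$ and $0<\beta<1$. Then there exists a solution $x^*$ of $F(x)=y$ with $x^*\in B_{2\rho}(x_0)\cap\mathrm{dom}(\mathcal R)$ such that $\lim_{n\to\infty}D_{\mathcal R}^{\xi_n}(x^*,x_n)=0$ and $\lim_{n\to\infty}\|x_n-x^*\|=0$. If in addition $\mathrm{Ker}(L(x^\dagger))\subset\mathrm{Ker}(L(x))$ for all $x\in B_{2\rho}(x_0)$, then $x^*=x^\dagger$.
   Context: Setting. Let $X,Y$ be real Hilbert spaces. Let $\mathcal R:X\to(-\infty,\infty]$ be proper, lower semicontinuous and strongly convex with constant $\sigma>0$, i.e. $\mathcal R(t\bar x+(1-t)x)+\sigma t(1-t)\|\bar x-x\|^2\le t\mathcal R(\bar x)+(1-t)\mathcal R(x)$ for all $\bar x,x\in\mathrm{dom}(\mathcal R)$ and $t\in[0,1]$. For $\xi\in\partial\mathcal R(x)$ (subdifferential) the Bregman distance is $D_{\mathcal R}^{\xi}(z,x)=\mathcal R(z)-\mathcal R(x)-\langle\xi,z-x\rangle$. The convex conjugate $\mathcal R^*$ is differentiable with $\|\nabla\mathcal R^*(\bar\xi)-\nabla\mathcal R^*(\xi)\|\le\|\bar\xi-\xi\|/(2\sigma)$, and $\nabla\mathcal R^*(\xi)=\arg\min_{x\in X}\{\mathcal R(x)-\langle\xi,x\rangle\}$ (unique minimizer), with $\xi\in\partial\mathcal R(\nabla\mathcal R^*(\xi))$. Let $F:\mathrm{dom}(F)\subset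 X\to Y$ and $y\in Y$. Assume: (b) there are $\rho>0$, $x_0\in X$, $\xi_0\in\partial\mathcal R(x_0)$ with $B_{2\rho}(x_0):=\{x:\|x-x_0\|\le 2\rho\}\subset\mathrm{dom}(F)$, and $F(x)=y$ has a solution $\bar x$ with $D_{\mathcal R}^{\xi_0}(\bar x,x_0)\le\sigma\rho^2$; (c) $F$ is weakly closed: if $x_n\in\mathrm{dom}(F)$, $x_n\rightharpoonup x$ and $F(x_n)\to v$, then $x\in\mathrm{dom}(F)$ and $F(x)=v$; (d) there are bounded linear operators $L(x):X\to Y$, $x\in B_{2\rho}(x_0)$, with $x\mapsto L(x)$ continuous on $B_{2\rho}(x_0)$, a constant $\eta\in[0,1)$ with $\|F(x)-F(\bar x)-L(\bar x)(x-\bar x)\|\le\eta\|F(x)-F(\bar x)\|$ for all $x,\bar x\in B_{2\rho}(x_0)$, and a constant $L>0$ with $\|L(x)\|\le L$ on $B_{2\rho}(x_0)$. Under these assumptions $F(x)=y$ has a unique solution $x^\dagger\in\mathrm{dom}(F)$ minimizing $D_{\mathcal R}^{\xi_0}(x,x_0)$ over all solutions; it satisfies $\|x^\dagger-x_0\|\le\rho$. Algorithm 2 (exact data $y$). Parameters: $\beta\in(0,\infty]$, $\mu_0>0$, $\mu_1>0$, and a fixed choice of step-size rule: (constant) $\alpha_n=\mu_0/L^2$, or (adaptive) $\alpha_n=\min\{\mu_0\|r_n\|^2/\|g_n\|^2,\mu_1\}$ if $r_n\ne0$ and $\alpha_n=0$ if $r_n=0$ (with $\mu_0\|r_n\|^2/\|g_n\|^2:=+\infty$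 if $g_n=0$). Set $\xi_{-1}=\xi_0$, $x_0=\nabla\mathcal R^*(\xi_0)$. For all $n\ge0$ (no stopping): $r_n:=F(x_n)-y$, $g_n:=L(x_n)^*r_n$, $\alpha_n$ by the chosen rule; $m_n:=\xi_n-\xi_{n-1}$; $\tilde\gamma_0:=0$ and for $n\ge1$, $\tilde\gamma_n:=\langle m_n,x_n-x_{n-1}\rangle-(1-\eta)\alpha_{n-1}\|r_{n-1}\|^2+\beta_{n-1}\tilde\gamma_{n-1}$; $\beta_n:=\min\{\max\{0,(\alpha_n\langle g_n,m_n\rangle-2\sigma\tilde\gamma_n)/\|m_n\|^2\},\beta\}$ if $m_n\ne0$ and $\beta_n:=0$ if $m_n=0$; $\xi_{n+1}:=\xi_n-\alpha_ng_n+\beta_nm_n$, $x_{n+1}:=\nabla\mathcal R^*(\xi_{n+1})$. *)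

theory Defs
  imports "HOL-Analysis.Analysis" "HOL-Library.Extended_Real"
begin

definition effdom :: "('a \<Rightarrow> ereal) \<Rightarrow> 'a set" where
  "effdom R = {x. R x < \<infinity>}"

definition proper_fun :: "('a \<Rightarrow> ereal) \<Rightarrow> bool" where
  "proper_fun R \<longleftrightarrow> (\<forall>x. R x \<noteq> -\<infinity>) \<and> (\<exists>x. R x \<noteq> \<infinity>)"

definition lsc_fun :: "('a::metric_space \<Rightarrow> ereal) \<Rightarrow> bool" where
  "lsc_fun R \<longleftrightarrow> (\<forall>s x. s \<longlonglongrightarrow> x \<longrightarrow> R x \<le> liminf (\<lambda>n. R (s n)))"

definition strongly_convex :: "('a::real_normed_vector \<Rightarrow> ereal) \<Rightarrow> real \<Rightarrow> bool" where
  "strongly_convex R \<sigma> \<longleftrightarrow>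
     (\<forall>xb\<in>effdom R. \<forall>x\<in>effdom R. \<forall>t\<in>{0..1::real}.
        R (t *\<^sub>R xb + (1 - t) *\<^sub>R x) + ereal (\<sigma> * t * (1 - t) * (norm (xb - x))\<^sup>2)
          \<le> ereal t * R xb + ereal (1 - t) * R x)"

definition subdiff :: "('a::real_inner \<Rightarrow> ereal) \<Rightarrow> 'a \<Rightarrow> 'a set" where
  "subdiff R x = {\<xi>. R x < \<infinity> \<and> (\<forall>z. R x + ereal (inner \<xi> (z - x)) \<le> R z)}"

definition bregman :: "('a::real_inner \<Rightarrow> ereal) \<Rightarrow> 'a \<Rightarrow> 'a \<Rightarrow> 'a \<Rightarrow> ereal" where
  "bregman R \<xi> z x = R z - R x - ereal (inner \<xi> (z - x))"

text \<open>x is a minimizer of R(.) - <xi,.>, i.e. x = grad R^*(xi) (the minimizer is unique).\<close>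
definition is_grad_conj :: "('a::real_inner \<Rightarrow> ereal) \<Rightarrow> 'a \<Rightarrow> 'a \<Rightarrow> bool" where
  "is_grad_conj R \<xi> x \<longleftrightarrow> (\<forall>z. R x - ereal (inner \<xi> x) \<le> R z - ereal (inner \<xi> z))"

definition weak_conv :: "(nat \<Rightarrow> 'a::real_inner) \<Rightarrow> 'a \<Rightarrow> bool" where
  "weak_conv s x \<longleftrightarrow> (\<forall>v. (\<lambda>n. inner (s n) v) \<longlonglongrightarrow> inner x v)"

end

theory Submission
  imports Defs
begin

lemma quad_zero:
  fixes a b :: real
  assumes "b \<ge> 0" and "\<And>t. 0 \<le> 2*t*a + t^2*b"
  shows "a = 0"
proof (rule ccontr)
  assume "a \<noteq> 0"
  define t where "t = - a/(b+1)"
  have bp: "b+1 > 0" using assms(1) by simp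
  have ts: "t*(b+1) = -a" unfolding t_def using bp by simp
  have "0 \<le> 2*t*a + t^2*b" by (rule assms(2))
  then have "0 \<le> (b+1)^2 * (2*t*a + t^2*b)" by (metis mult_nonneg_nonneg zero_le_power2)
  also have "(b+1)^2 * (2*t*a + t^2*b) = 2*a*(t*(b+1))*(b+1) + (t*(b+1))^2*b"
    by (simp add: power2_eq_square algebra_simps)
  also have "\<dots> = - (a^2*(b+2))" unfolding ts by (simp add: power2_eq_square algebra_simps)
  also have "\<dots> < 0" using \<open>a\<noteq>0\<close> assms(1) by simp
  finally show False by simp
qed

lemma parallelogram:
  fixes v w :: "'a::real_inner"
  shows "(norm (v - w))^2 + (norm (v + w))^2 = 2*(norm v)^2 + 2*(norm w)^2"
  by (simp add: power2_norm_eq_inner inner_diff_left inner_diff_right inner_add_left inner_add_right inner_commute)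

lemma riesz:
  fixes \<phi> :: "'a::{real_inner,complete_space} \<Rightarrow> real"
  assumes bl: "bounded_linear \<phi>"
  shows "\<exists>u. \<forall>x. \<phi> x = inner x u"
proof (cases "\<forall>x. \<phi> x = 0")
  case True
  then show ?thesis by (intro exI[of _ 0]) simp
next
  case False
  then obtain v0 where v0: "\<phi> v0 \<noteq> 0" by blast
  interpret bounded_linear \<phi> by (rule bl)
  define K where "K = {v. \<phi> v = 1}"
  have v0K: "v0 /\<^sub>R \<phi> v0 \<in> K" using v0 by (simp add: K_def scale)
  define d where "d = Inf (norm ` K)"
  have bdd: "bdd_below (norm ` K)" by (rule bdd_belowI[of _ 0]) auto
  have d_le: "d \<le> norm v" if "v \<in> K" for v
    unfolding d_def using that bdd by (auto intro: cInf_lower)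
  have d_nn: "0 \<le> d" unfolding d_def using v0K by (intro cInf_greatest) auto
  have "\<exists>v\<in>K. (norm v)^2 < d^2 + 1/(Suc n)" for n
  proof -
    have "d < sqrt (d^2 + 1/(Suc n))"
      using d_nn by (intro real_less_rsqrt) auto
    then obtain v where "v \<in> K" "norm v < sqrt (d^2 + 1/(Suc n))"
      using cInf_lessD[of "norm ` K"] v0K unfolding d_def by blast
    then have "(norm v)^2 < (sqrt (d^2 + 1/(Suc n)))^2"
      by (intro power_strict_mono) auto
    then have "(norm v)^2 < d^2 + 1/(Suc n)"
      by (simp add: add_nonneg_nonneg)
    then show ?thesis using \<open>v\<in>K\<close> by blast
  qed
  then obtain s where sK: "\<And>n. s n \<in> K" and sn: "\<And>n. (norm (s n))^2 < d^2 + 1/(Suc n)"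
    by metis
  have mid: "(norm (v - w))^2 \<le> 2*(norm v)^2 + 2*(norm w)^2 - 4*d^2" if "v \<in> K" "w \<in> K" for v w
  proof -
    have "(1/2) *\<^sub>R (v + w) \<in> K" using that by (simp add: K_def scale add)
    then have "d \<le> norm ((1/2) *\<^sub>R (v + w))" by (rule d_le)
    then have "d \<le> norm (v+w)/2" by simp
    then have "2*d \<le> norm (v+w)" by simp
    then have "(2*d)^2 \<le> (norm (v+w))^2"
      using d_nn by (intro power_mono) auto
    then have "4*d^2 \<le> (norm (v+w))^2" by (simp add: power_mult_distrib)
    then show ?thesis using parallelogram[of v w] by linarith
  qed
  have "Cauchy s"
  proof (rule metric_CauchyI)
    fix e :: real assume "e > 0"
    obtain M :: nat where M: "4 / e^2 < M" using reals_Archimedean2 by blast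
    show "\<exists>M. \<forall>m\<ge>M. \<forall>n\<ge>M. dist (s m) (s n) < e"
    proof (intro exI allI impI)
      fix m n assume mM: "m \<ge> M" and nM: "n \<ge> M"
      have "(norm (s m - s n))^2 \<le> 2*(norm (s m))^2 + 2*(norm (s n))^2 - 4*d^2" by (rule mid[OF sK sK])
      also have "\<dots> < 2/(Suc m) + 2/(Suc n)" using sn[of m] sn[of n] by simp
      also have "\<dots> \<le> 2/(Suc M) + 2/(Suc M)"
        using mM nM by (intro add_mono divide_left_mono) auto
      also have "\<dots> < e^2"
      proof -
        have "4 < e^2 * M" using M \<open>e>0\<close> by (simp add: field_simps)
        also have "\<dots> \<le> e^2 * Suc M" by (intro mult_left_mono) auto
        finally have "4 / real (Suc M) < e^2" by (simp add: divide_less_eq mult.commute)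
        moreover have "2/real(Suc M) + 2/real(Suc M) = 4/real(Suc M)" by (simp only: add_divide_distrib[symmetric]) simp
        ultimately show ?thesis by simp
      qed
      finally have "(norm (s m - s n))^2 < e^2" .
      then have "norm (s m - s n) < e" using power_less_imp_less_base[of "norm (s m - s n)" 2 e] \<open>e>0\<close> by auto
      then show "dist (s m) (s n) < e" by (simp add: dist_norm)
    qed
  qed
  then obtain u0 where lim: "s \<longlonglongrightarrow> u0" using Cauchy_convergent_iff convergent_def by blast
  have "(\<lambda>n. \<phi> (s n)) \<longlonglongrightarrow> \<phi> u0" by (rule tendsto[OF lim])
  moreover have "(\<lambda>n. \<phi> (s n)) = (\<lambda>n. 1)" using sK by (auto simp: K_def)
  ultimately have u0K: "\<phi> u0 = 1" by (metis LIMSEQ_const_iff)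
  have "(\<lambda>n. (norm (s n))^2) \<longlonglongrightarrow> (norm u0)^2"
    by (intro tendsto_intros lim)
  moreover have "(\<lambda>n. d^2 + 1/(Suc n)) \<longlonglongrightarrow> d^2 + 0"
    by (intro tendsto_intros LIMSEQ_inverse_real_of_nat[unfolded inverse_eq_divide])
  ultimately have u0d: "(norm u0)^2 \<le> d^2"
    using sn by (intro LIMSEQ_le) (auto intro: less_imp_le)
  have orth: "inner u0 w = 0" if "\<phi> w = 0" for w
  proof (rule quad_zero[of "(norm w)^2"])
    fix t :: real
    have "u0 + t *\<^sub>R w \<in> K" using u0K that by (simp add: K_def add scale)
    then have "d \<le> norm (u0 + t *\<^sub>R w)" by (rule d_le)
    then have "d^2 \<le> (norm (u0 + t *\<^sub>R w))^2" using d_nn by (simp add: power_mono)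
    also have "\<dots> = (norm u0)^2 + 2*t*inner u0 w + t^2*(norm w)^2"
      unfolding power2_norm_eq_inner by (simp add: inner_add_left inner_add_right inner_commute power2_eq_square algebra_simps)
    finally show "0 \<le> 2*t*inner u0 w + t^2*(norm w)^2" using u0d by linarith
  qed simp
  have u0nz: "u0 \<noteq> 0" using u0K zero by auto
  show ?thesis
  proof (intro exI allI)
    fix x
    have "\<phi> (x - \<phi> x *\<^sub>R u0) = 0" using u0K by (simp add: diff scale)
    then have "inner u0 (x - \<phi> x *\<^sub>R u0) = 0" by (rule orth)
    then have "inner u0 x = \<phi> x * (norm u0)^2"
      by (simp add: inner_diff_right power2_norm_eq_inner)
    then show "\<phi> x = inner x ((1/(norm u0)^2) *\<^sub>R u0)"
      using u0nz by (simp add: inner_commute field_simps)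
  qed
qed

lemma adjoint_blinfun:
  fixes T :: "'a::{real_inner,complete_space} \<Rightarrow>\<^sub>L 'b::real_inner"
  shows "inner (adjoint (blinfun_apply T) w) v = inner w (blinfun_apply T v)"
    and "norm (adjoint (blinfun_apply T) w) \<le> norm T * norm w"
proof -
  have "\<forall>w. \<exists>u. \<forall>v. inner (blinfun_apply T v) w = inner v u"
  proof
    fix w
    have "bounded_linear (\<lambda>v. inner (blinfun_apply T v) w)"
      by (rule bounded_linear_compose[OF bounded_linear_inner_left blinfun.bounded_linear_right])
    then show "\<exists>u. \<forall>v. inner (blinfun_apply T v) w = inner v u" by (rule riesz)
  qed
  then obtain f where f: "\<And>v w. inner (blinfun_apply T v) w = inner v (f w)" by metis
  have ex: "\<exists>f'. \<forall>v w. inner (blinfun_apply T v) w = inner v (f' w)" using f by blast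
  have adj: "\<forall>v w. inner (blinfun_apply T v) w = inner v (adjoint (blinfun_apply T) w)"
    unfolding adjoint_def by (rule someI_ex[OF ex])
  show 1: "inner (adjoint (blinfun_apply T) w) v = inner w (blinfun_apply T v)"
    using adj by (simp add: inner_commute)
  define u where "u = adjoint (blinfun_apply T) w"
  have "(norm u)^2 = inner w (blinfun_apply T u)"
    using adj[rule_format, of u w] by (simp add: u_def power2_norm_eq_inner inner_commute)
  also have "\<dots> \<le> norm w * norm (blinfun_apply T u)" by (rule norm_cauchy_schwarz)
  also have "\<dots> \<le> norm w * (norm T * norm u)" by (intro mult_left_mono norm_blinfun) auto
  finally have *: "norm u * norm u \<le> (norm T * norm w) * norm u" by (simp add: power2_eq_square algebra_simps)
  show "norm (adjoint (blinfun_apply T) w) \<le> norm T * norm w"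
  proof (cases "norm u = 0")
    case True then show ?thesis by (simp add: u_def)
  next
    case False then have "norm u > 0" by simp
    with * show ?thesis unfolding u_def[symmetric] by (simp add: mult_le_cancel_right)
  qed
qed

locale alg =
  fixes R :: "'a::{real_inner,complete_space} \<Rightarrow> ereal"
    and F :: "'a \<Rightarrow> 'b::{real_inner,complete_space}"
    and domF :: "'a set"
    and y :: 'b
    and L :: "'a \<Rightarrow> ('a \<Rightarrow>\<^sub>L 'b)"
    and \<sigma> \<rho> \<eta> Lc \<mu>0 \<mu>1 \<beta> :: real
    and x0 \<xi>0 :: 'a
    and adaptive :: bool
    and \<xi> x m g :: "nat \<Rightarrow> 'a"
    and r :: "nat \<Rightarrow> 'b"
    and \<alpha> bt gt :: "nat \<Rightarrow> real"
  assumes R_proper: "proper_fun R"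
    and R_lsc: "lsc_fun R"
    and \<sigma>_pos: "\<sigma> > 0"
    and R_sconv: "strongly_convex R \<sigma>"
    and \<rho>_pos: "\<rho> > 0"
    and \<xi>0_sub: "\<xi>0 \<in> subdiff R x0"
    and ball_domF: "cball x0 (2 * \<rho>) \<subseteq> domF"
    and sol_exists: "\<exists>xb\<in>domF. F xb = y \<and> bregman R \<xi>0 xb x0 \<le> ereal (\<sigma> * \<rho>\<^sup>2)"
    and F_wclosed: "\<And>s u v. (\<forall>n. s n \<in> domF) \<Longrightarrow> weak_conv s u \<Longrightarrow>
                       (\<lambda>n. F (s n)) \<longlonglongrightarrow> v \<Longrightarrow> u \<in> domF \<and> F u = v"
    and L_cont: "continuous_on (cball x0 (2 * \<rho>)) L"
    and \<eta>_range: "0 \<le> \<eta>" "\<eta> < 1"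
    and tcc: "\<And>u ub. u \<in> cball x0 (2 * \<rho>) \<Longrightarrow> ub \<in> cball x0 (2 * \<rho>) \<Longrightarrow>
               norm (F u - F ub - blinfun_apply (L ub) (u - ub)) \<le> \<eta> * norm (F u - F ub)"
    and Lc_pos: "Lc > 0"
    and L_bound: "\<And>u. u \<in> cball x0 (2 * \<rho>) \<Longrightarrow> norm (L u) \<le> Lc"
    and \<mu>0_range: "0 < \<mu>0" "\<mu>0 < 4 * \<sigma> * (1 - \<eta>)"
    and \<mu>1_pos: "\<mu>1 > 0"
    and \<beta>_range: "0 < \<beta>" "\<beta> < 1"
    and x_init: "x 0 = x0"
    and \<xi>_init: "\<xi> 0 = \<xi>0"
    and x_grad: "\<And>n. is_grad_conj R (\<xi> n) (x n)"
    and r_def: "\<And>n. r n = F (x n) - y"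
    and g_def: "\<And>n. g n = adjoint (blinfun_apply (L (x n))) (r n)"
    and \<alpha>_def: "\<And>n. \<alpha> n =
          (if adaptive then
             (if r n = 0 then 0
              else if g n = 0 then \<mu>1
              else min (\<mu>0 * (norm (r n))\<^sup>2 / (norm (g n))\<^sup>2) \<mu>1)
           else \<mu>0 / Lc\<^sup>2)"
    and m_def: "\<And>n. m n = (if n = 0 then \<xi> 0 - \<xi>0 else \<xi> n - \<xi> (n - 1))"
    and gt_0: "gt 0 = 0"
    and gt_Suc: "\<And>n. gt (Suc n) = inner (m (Suc n)) (x (Suc n) - x n)
                   - (1 - \<eta>) * \<alpha> n * (norm (r n))\<^sup>2 + bt n * gt n"
    and bt_def: "\<And>n. bt n = (if m n = 0 then 0
                   else min (max 0 ((\<alpha> n * inner (g n) (m n) - 2 * \<sigma> * gt n) / (norm (m n))\<^sup>2)) \<beta>)"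
    and \<xi>_Suc: "\<And>n. \<xi> (Suc n) = \<xi> n - \<alpha> n *\<^sub>R g n + bt n *\<^sub>R m n"
begin

abbreviation "B \<equiv> cball x0 (2 * \<rho>)"

definition "Rr w = real_of_ereal (R w)"
definition "Phi n z = - Rr (x n) - inner (\<xi> n) (z - x n)"
definition "cc = 1 - \<eta> - \<mu>0 / (4 * \<sigma>)"
definition "amax = max (\<mu>0 / Lc^2) \<mu>1"
definition "amin = min (\<mu>0 / Lc^2) \<mu>1"
definition "sol z \<longleftrightarrow> z \<in> B \<and> F z = y"

lemma cc_pos: "cc > 0"
proof -
  have "\<mu>0 / (4*\<sigma>) < 1 - \<eta>" using \<mu>0_range \<sigma>_pos by (simp add: divide_less_eq mult.commute)
  then show ?thesis unfolding cc_def by simp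
qed

lemma amin_pos: "amin > 0" unfolding amin_def using \<mu>0_range \<mu>1_pos Lc_pos by simp

lemma g_inner: "inner (g n) v = inner (r n) (blinfun_apply (L (x n)) v)"
  unfolding g_def by (rule adjoint_blinfun(1))

lemma g_norm: "norm (g n) \<le> norm (L (x n)) * norm (r n)"
  unfolding g_def by (rule adjoint_blinfun(2))

lemma g_normB: "x n \<in> B \<Longrightarrow> norm (g n) \<le> Lc * norm (r n)"
  using g_norm[of n] L_bound[of "x n"] by (meson mult_right_mono norm_ge_zero order_trans)

lemma R_not_minf: "R w \<noteq> -\<infinity>"
  using R_proper unfolding proper_fun_def by blast

lemma grad_finite:
  assumes "is_grad_conj R \<zeta> w"
  shows "R w = ereal (Rr w)"
proof -
  obtain p where p: "R p \<noteq> \<infinity>" using R_proper unfolding proper_fun_def by blast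
  have le: "R w - ereal (inner \<zeta> w) \<le> R p - ereal (inner \<zeta> p)"
    using assms unfolding is_grad_conj_def by blast
  have "R w \<noteq> \<infinity>"
  proof
    assume "R w = \<infinity>"
    then have "R p - ereal (inner \<zeta> p) = \<infinity>" using le by simp
    then show False using p R_not_minf[of p] by (cases "R p") auto
  qed
  then show ?thesis using R_not_minf[of w] unfolding Rr_def by (cases "R w") auto
qed

lemma grad_sub:
  assumes "is_grad_conj R \<zeta> w" "R w = ereal a"
  shows "ereal a + ereal (inner \<zeta> (v - w)) \<le> R v"
proof -
  have le: "R w - ereal (inner \<zeta> w) \<le> R v - ereal (inner \<zeta> v)"
    using assms unfolding is_grad_conj_def by blast
  show ?thesis
  proof (cases "R v")
    case (real b)
    then show ?thesis using le assms(2) by (simp add: inner_diff_right)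
  next
    case PInf then show ?thesis by simp
  next
    case MInf then show ?thesis using R_not_minf by simp
  qed
qed

lemma sc_lower:
  assumes Rw: "R w = ereal a" and sub: "\<And>v. ereal a + ereal (inner \<zeta> (v - w)) \<le> R v"
    and Rz: "R z = ereal b"
  shows "\<sigma> * (norm (z - w))^2 \<le> b - a - inner \<zeta> (z - w)"
proof -
  define c where "c = inner \<zeta> (z - w)"
  define d where "d = (norm (z - w))^2"
  have key: "c + \<sigma> * (1 - t) * d \<le> b - a" if t: "0 < t" "t \<le> 1" for t
  proof -
    define p where "p = t *\<^sub>R z + (1 - t) *\<^sub>R w"
    have zd: "z \<in> effdom R" "w \<in> effdom R" using Rw Rz by (auto simp: effdom_def)
    have sc: "R p + ereal (\<sigma> * t * (1 - t) * d) \<le> ereal t * R z + ereal (1 - t) * R w"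
      using R_sconv zd t unfolding strongly_convex_def p_def d_def by auto
    have pw: "p - w = t *\<^sub>R (z - w)" unfolding p_def by (simp add: algebra_simps)
    have lo: "ereal a + ereal (t * c) \<le> R p" using sub[of p] unfolding pw c_def by simp
    obtain q where q: "R p = ereal q"
    proof (cases "R p")
      case (real q) then show ?thesis using that by simp
    next
      case PInf then have False using sc Rw Rz by simp
      then show ?thesis ..
    next
      case MInf then show ?thesis using R_not_minf by simp
    qed
    have 1: "a + t * c \<le> q" using lo q by simp
    have 2: "q + \<sigma> * t * (1 - t) * d \<le> t * b + (1 - t) * a" using sc q Rw Rz by simp
    have "t * (c + \<sigma> * (1 - t) * d) \<le> t * (b - a)" using 1 2 by (simp add: algebra_simps)
    then show ?thesis using t by simp
  qed
  show ?thesis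
  proof (rule ccontr)
    assume "\<not> ?thesis"
    then have gt: "\<sigma> * d > b - a - c" unfolding c_def d_def by simp
    have Q0: "b - a - c \<ge> 0" using key[of 1] by simp
    have dpos: "\<sigma> * d > 0" using gt Q0 by simp
    define t where "t = min 1 ((\<sigma> * d - (b - a - c)) / (2 * (\<sigma> * d)))"
    have t0: "0 < t" using gt dpos unfolding t_def by simp
    have t1: "t \<le> 1" unfolding t_def by simp
    have "t * (\<sigma> * d) \<le> (\<sigma> * d - (b - a - c)) / 2"
    proof -
      have "t \<le> (\<sigma> * d - (b - a - c)) / (2 * (\<sigma> * d))" unfolding t_def by simp
      then have "t * (\<sigma> * d) \<le> (\<sigma> * d - (b - a - c)) / (2 * (\<sigma> * d)) * (\<sigma> * d)"
        using dpos by (intro mult_right_mono) auto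
      also have "\<dots> = (\<sigma> * d - (b - a - c)) / 2"
      proof -
        have "\<And>X S::real. S > 0 \<Longrightarrow> X/(2*S)*S = X/2" by (simp add: field_simps)
        then show ?thesis using dpos by blast
      qed
      finally show ?thesis .
    qed
    then have "\<sigma> * (1 - t) * d > b - a - c" using gt by (simp add: algebra_simps)
    then show False using key[OF t0 t1] by simp
  qed
qed

lemma xR: "R (x n) = ereal (Rr (x n))"
  by (rule grad_finite[OF x_grad])

lemma x_sub: "ereal (Rr (x n)) + ereal (inner (\<xi> n) (v - x n)) \<le> R v"
  by (rule grad_sub[OF x_grad xR])

lemma x0R: "R x0 = ereal (Rr x0)" using xR[of 0] x_init by simp

lemma D_lower_gen:
  assumes "R z = ereal b"
  shows "\<sigma> * (norm (z - x n))^2 \<le> b - Rr (x n) - inner (\<xi> n) (z - x n)"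
  by (rule sc_lower[OF xR x_sub assms])

lemma D_lower: "\<sigma> * (norm (x k - x n))^2 \<le> Rr (x k) - Rr (x n) - inner (\<xi> n) (x k - x n)"
  by (rule D_lower_gen[OF xR])

lemma D_upper: "Rr (x k) - Rr (x n) - inner (\<xi> n) (x k - x n) \<le> (norm (\<xi> k - \<xi> n))^2 / (4 * \<sigma>)"
proof -
  define d where "d = norm (x k - x n)"
  define e where "e = norm (\<xi> k - \<xi> n)"
  have D2: "\<sigma> * d^2 \<le> Rr (x n) - Rr (x k) - inner (\<xi> k) (x n - x k)"
    using D_lower[of n k] unfolding d_def by (simp add: norm_minus_commute)
  have sum: "(Rr (x k) - Rr (x n) - inner (\<xi> n) (x k - x n)) + (Rr (x n) - Rr (x k) - inner (\<xi> k) (x n - x k))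
     = inner (\<xi> k - \<xi> n) (x k - x n)"
    by (simp add: inner_diff_left inner_diff_right algebra_simps)
  have cs: "inner (\<xi> k - \<xi> n) (x k - x n) \<le> e * d" unfolding e_def d_def by (rule norm_cauchy_schwarz)
  have "e * d - \<sigma> * d^2 \<le> e^2 / (4 * \<sigma>)"
  proof -
    have "0 \<le> (e - 2 * \<sigma> * d)^2" by simp
    then have "4 * \<sigma> * (e * d - \<sigma> * d^2) \<le> e^2" by (simp add: power2_eq_square algebra_simps)
    then show ?thesis using \<sigma>_pos by (simp add: le_divide_eq mult.commute)
  qed
  then show ?thesis using D2 sum cs unfolding e_def by linarith
qed

lemma m0: "m 0 = 0" using m_def[of 0] \<xi>_init by simp

lemma m_Suc': "m (Suc n) = \<xi> (Suc n) - \<xi> n" using m_def[of "Suc n"] by simp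

lemma m_Suc: "m (Suc n) = bt n *\<^sub>R m n - \<alpha> n *\<^sub>R g n"
  unfolding m_Suc' \<xi>_Suc by (simp add: algebra_simps)

lemma bt_nn: "0 \<le> bt n" unfolding bt_def[of n] using \<beta>_range by auto

lemma bt_le: "bt n \<le> \<beta>" unfolding bt_def[of n] using \<beta>_range by auto

lemma bt_key: "bt n * (bt n * (norm (m n))^2 - 2 * \<alpha> n * inner (g n) (m n) + 4 * \<sigma> * gt n) \<le> 0"
proof (cases "bt n = 0")
  case True then show ?thesis by simp
next
  case False
  then have mnz: "m n \<noteq> 0" unfolding bt_def[of n] by auto
  define q where "q = (\<alpha> n * inner (g n) (m n) - 2 * \<sigma> * gt n) / (norm (m n))^2"
  have btq: "bt n = min (max 0 q) \<beta>" unfolding bt_def[of n] q_def using mnz by simp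
  have btpos: "bt n > 0" using False bt_nn[of n] by simp
  have qpos: "q > 0" using btq btpos \<beta>_range by (auto simp: min_def max_def split: if_splits)
  have "bt n \<le> q" using btq qpos by simp
  have mpos: "(norm (m n))^2 > 0" using mnz by simp
  have qm: "q * (norm (m n))^2 = \<alpha> n * inner (g n) (m n) - 2 * \<sigma> * gt n"
    unfolding q_def using mpos by simp
  have "bt n * (norm (m n))^2 \<le> q * (norm (m n))^2"
    using \<open>bt n \<le> q\<close> mpos by (intro mult_right_mono) auto
  then have "bt n * (norm (m n))^2 - 2 * \<alpha> n * inner (g n) (m n) + 4 * \<sigma> * gt n \<le> - (q * (norm (m n))^2)"
    using qm by linarith
  also have "\<dots> \<le> 0" using qpos mpos by simp
  finally show ?thesis using btpos by (simp add: mult_nonpos_nonneg mult_le_0_iff)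
qed

lemma alpha_nn: "0 \<le> \<alpha> n"
  unfolding \<alpha>_def[of n] using \<mu>0_range \<mu>1_pos Lc_pos by auto

lemma alpha_le: "\<alpha> n \<le> amax"
  unfolding \<alpha>_def[of n] amax_def using \<mu>1_pos by (auto simp: min_def)

lemma alpha_g: assumes "x n \<in> B" shows "\<alpha> n * (norm (g n))^2 \<le> \<mu>0 * (norm (r n))^2"
proof -
  have gb: "norm (g n) \<le> Lc * norm (r n)" by (rule g_normB[OF assms])
  then have gb2: "(norm (g n))^2 \<le> Lc^2 * (norm (r n))^2"
    by (metis norm_ge_zero power_mono power_mult_distrib)
  show ?thesis
  proof (cases adaptive)
    case False
    then have "\<alpha> n = \<mu>0 / Lc^2" using \<alpha>_def[of n] by simp
    have "(norm (g n))^2 / Lc^2 \<le> (norm (r n))^2" using gb2 Lc_pos by (simp add: divide_le_eq mult.commute)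
    then have "\<mu>0 * ((norm (g n))^2 / Lc^2) \<le> \<mu>0 * (norm (r n))^2"
      using \<mu>0_range by (intro mult_left_mono) auto
    then show ?thesis using \<open>\<alpha> n = \<mu>0 / Lc^2\<close> by simp
  next
    case True
    show ?thesis
    proof (cases "r n = 0 \<or> g n = 0")
      case True
      then have "g n = 0" using g_norm[of n] by auto
      then show ?thesis using \<mu>0_range by simp
    next
      case False
      then have "\<alpha> n = min (\<mu>0 * (norm (r n))\<^sup>2 / (norm (g n))\<^sup>2) \<mu>1" using \<alpha>_def[of n] True by simp
      then have "\<alpha> n \<le> \<mu>0 * (norm (r n))\<^sup>2 / (norm (g n))\<^sup>2" by simp
      then have "\<alpha> n * (norm (g n))^2 \<le> \<mu>0 * (norm (r n))\<^sup>2 / (norm (g n))\<^sup>2 * (norm (g n))^2"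
        by (intro mult_right_mono) auto
      also have "\<dots> = \<mu>0 * (norm (r n))^2" using False by simp
      finally show ?thesis .
    qed
  qed
qed

lemma alpha_ge: assumes "x n \<in> B" "r n \<noteq> 0" shows "amin \<le> \<alpha> n"
proof (cases adaptive)
  case False then show ?thesis using \<alpha>_def[of n] by (simp add: amin_def)
next
  case True
  show ?thesis
  proof (cases "g n = 0")
    case True then show ?thesis using \<alpha>_def[of n] \<open>adaptive\<close> assms by (simp add: amin_def)
  next
    case False
    have gb: "norm (g n) \<le> Lc * norm (r n)" by (rule g_normB[OF assms(1)])
    then have gb2: "(norm (g n))^2 \<le> Lc^2 * (norm (r n))^2"
      by (metis norm_ge_zero power_mono power_mult_distrib)
    have gpos: "(norm (g n))^2 > 0" using False by simp
    have "\<mu>0 / Lc^2 \<le> \<mu>0 * (norm (r n))\<^sup>2 / (norm (g n))\<^sup>2"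
      using gb2 gpos Lc_pos \<mu>0_range by (simp add: field_simps mult_left_mono)
    then show ?thesis using \<alpha>_def[of n] \<open>adaptive\<close> assms False by (simp add: amin_def min_def)
  qed
qed

lemma alpha_r: assumes "x n \<in> B" shows "amin * (norm (r n))^2 \<le> \<alpha> n * (norm (r n))^2"
  using alpha_ge[OF assms] by (cases "r n = 0") (auto intro: mult_right_mono)

lemma tcc_norm:
  assumes "u \<in> B" "ub \<in> B"
  shows "norm (blinfun_apply (L ub) (u - ub)) \<le> (1 + \<eta>) * norm (F u - F ub)"
proof -
  have "norm (blinfun_apply (L ub) (u - ub)) \<le> norm (F u - F ub) + norm (F u - F ub - blinfun_apply (L ub) (u - ub))"
    by (metis add.commute diff_diff_eq2 diff_add_cancel norm_triangle_ineq4 add_diff_cancel_left' norm_minus_commute norm_triangle_sub)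
  also have "\<dots> \<le> norm (F u - F ub) + \<eta> * norm (F u - F ub)" using tcc[OF assms] by simp
  finally show ?thesis by (simp add: algebra_simps)
qed

lemma tcc_r:
  assumes "x n \<in> B" "sol z"
  shows "(1 - \<eta>) * (norm (r n))^2 \<le> inner (r n) (blinfun_apply (L (x n)) (x n - z))"
proof -
  have zB: "z \<in> B" and Fz: "F z = y" using assms(2) by (auto simp: sol_def)
  define e where "e = F z - F (x n) - blinfun_apply (L (x n)) (z - x n)"
  have en: "norm e \<le> \<eta> * norm (r n)"
    using tcc[OF zB assms(1)] unfolding e_def r_def Fz by (simp add: norm_minus_commute)
  have Le: "blinfun_apply (L (x n)) (x n - z) = r n + e"
    unfolding e_def r_def Fz by (simp add: blinfun.diff_right algebra_simps)
  have "inner (r n) (r n + e) = (norm (r n))^2 + inner (r n) e"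
    by (simp add: inner_add_right power2_norm_eq_inner)
  moreover have "- inner (r n) e \<le> norm (r n) * (\<eta> * norm (r n))"
    using norm_cauchy_schwarz[of "r n" "-e"] en
    by (metis inner_minus_right mult_left_mono norm_ge_zero norm_minus_cancel order_trans)
  ultimately show ?thesis unfolding Le by (simp add: power2_eq_square algebra_simps)
qed

end

context alg begin

lemma step:
  assumes xB: "x n \<in> B" and z: "sol z" and I: "inner (m n) (x n - z) \<le> gt n"
  shows "inner (m (Suc n)) (x (Suc n) - z) \<le> gt (Suc n)"
    and "Phi (Suc n) z \<le> Phi n z - cc * (\<alpha> n * (norm (r n))^2)"
proof -
  have inner_mz: "inner (m (Suc n)) (x n - z) = bt n * inner (m n) (x n - z) - \<alpha> n * inner (r n) (blinfun_apply (L (x n)) (x n - z))"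
    by (simp add: m_Suc inner_diff_left g_inner)
  have T: "(1-\<eta>) * (norm (r n))^2 \<le> inner (r n) (blinfun_apply (L (x n)) (x n - z))" by (rule tcc_r[OF xB z])
  have A: "\<alpha> n * ((1-\<eta>) * (norm (r n))^2) \<le> \<alpha> n * inner (r n) (blinfun_apply (L (x n)) (x n - z))"
    using T alpha_nn by (rule mult_left_mono)
  have Bt: "bt n * inner (m n) (x n - z) \<le> bt n * gt n" using I bt_nn by (rule mult_left_mono)
  have bound: "inner (m (Suc n)) (x n - z) \<le> bt n * gt n - (1-\<eta>) * \<alpha> n * (norm (r n))^2"
    using inner_mz A Bt by (simp add: algebra_simps)
  have split: "inner (m (Suc n)) (x (Suc n) - z) = inner (m (Suc n)) (x (Suc n) - x n) + inner (m (Suc n)) (x n - z)"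
    by (simp add: inner_diff_right)
  show "inner (m (Suc n)) (x (Suc n) - z) \<le> gt (Suc n)"
    using split bound gt_Suc[of n] by simp
  define P where "P = Phi (Suc n) z - Phi n z"
  define D where "D = Rr (x n) - Rr (x (Suc n)) - inner (\<xi> (Suc n)) (x n - x (Suc n))"
  define M2 where "M2 = (norm (m (Suc n)))^2"
  define a where "a = \<alpha> n * (norm (r n))^2"
  have diff: "P = D + inner (m (Suc n)) (x n - z)"
    unfolding P_def D_def Phi_def m_Suc' by (simp add: inner_diff_left inner_diff_right algebra_simps)
  have Du: "D \<le> M2 / (4 * \<sigma>)"
    using D_upper[of n "Suc n"] unfolding D_def M2_def m_Suc' by (simp add: norm_minus_commute)
  then have Du': "4 * \<sigma> * D \<le> M2" using \<sigma>_pos by (simp add: le_divide_eq mult.commute)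
  have msq: "M2 = (bt n)^2 * (norm (m n))^2 - 2 * bt n * \<alpha> n * inner (g n) (m n) + (\<alpha> n)^2 * (norm (g n))^2"
    unfolding M2_def m_Suc power2_norm_eq_inner
    by (simp add: inner_diff_left inner_diff_right inner_commute power2_eq_square algebra_simps)
  have key: "(bt n)^2 * (norm (m n))^2 - 2 * bt n * \<alpha> n * inner (g n) (m n) + 4 * \<sigma> * (bt n * gt n) \<le> 0"
  proof -
    have "bt n * (bt n * (norm (m n))^2 - 2 * \<alpha> n * inner (g n) (m n) + 4 * \<sigma> * gt n)
       = (bt n)^2 * (norm (m n))^2 - 2 * bt n * \<alpha> n * inner (g n) (m n) + 4 * \<sigma> * (bt n * gt n)"
      by (simp add: algebra_simps power2_eq_square)
    then show ?thesis using bt_key[of n] by simp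
  qed
  have ag: "(\<alpha> n)^2 * (norm (g n))^2 \<le> \<mu>0 * a"
  proof -
    have "(\<alpha> n)^2 * (norm (g n))^2 = \<alpha> n * (\<alpha> n * (norm (g n))^2)" by (simp add: power2_eq_square)
    also have "\<dots> \<le> \<alpha> n * (\<mu>0 * (norm (r n))^2)" using alpha_g[OF xB] alpha_nn by (rule mult_left_mono)
    finally show ?thesis unfolding a_def by (simp add: algebra_simps)
  qed
  have bound': "inner (m (Suc n)) (x n - z) \<le> bt n * gt n - (1-\<eta>) * a"
    using bound unfolding a_def by (simp add: algebra_simps)
  have ib: "4 * \<sigma> * inner (m (Suc n)) (x n - z) \<le> 4 * \<sigma> * (bt n * gt n - (1-\<eta>) * a)"
    by (rule mult_left_mono[OF bound']) (use \<sigma>_pos in simp)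
  have "4 * \<sigma> * P = 4 * \<sigma> * D + 4 * \<sigma> * inner (m (Suc n)) (x n - z)" unfolding diff by (simp add: algebra_simps)
  then have "4 * \<sigma> * P \<le> M2 + 4 * \<sigma> * (bt n * gt n - (1-\<eta>) * a)"
    using Du' ib by linarith
  also have "\<dots> \<le> \<mu>0 * a - 4 * \<sigma> * (1-\<eta>) * a" using msq key ag by (simp add: algebra_simps)
  also have "\<dots> = - (4 * \<sigma>) * (cc * a)" unfolding cc_def using \<sigma>_pos by (simp add: field_simps)
  finally have "4 * \<sigma> * P \<le> (4 * \<sigma>) * (- (cc * a))" by simp
  moreover have "4 * \<sigma> > 0" using \<sigma>_pos by simp
  ultimately have "P \<le> - (cc * a)" by (metis mult_le_cancel_left_pos)
  then show "Phi (Suc n) z \<le> Phi n z - cc * (\<alpha> n * (norm (r n))^2)" unfolding P_def a_def by simp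
qed

lemma ind:
  assumes z: "sol z"
  shows "(\<forall>k<n. x k \<in> B) \<Longrightarrow> inner (m n) (x n - z) \<le> gt n \<and> Phi n z \<le> Phi 0 z - cc * (\<Sum>k<n. \<alpha> k * (norm (r k))^2)"
proof (induction n)
  case 0
  then show ?case using m0 gt_0 by simp
next
  case (Suc n)
  then have xn: "x n \<in> B" and IH: "inner (m n) (x n - z) \<le> gt n \<and> Phi n z \<le> Phi 0 z - cc * (\<Sum>k<n. \<alpha> k * (norm (r k))^2)"
    by auto
  show ?case using step[OF xn z] IH by (simp add: algebra_simps)
qed

lemma xb_ex: "\<exists>z. z \<in> domF \<and> sol z \<and> R z = ereal (Rr z) \<and> Rr z - Rr x0 - inner \<xi>0 (z - x0) \<le> \<sigma> * \<rho>^2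
   \<and> norm (z - x0) \<le> \<rho>"
proof -
  obtain z where z: "z \<in> domF" "F z = y" "bregman R \<xi>0 z x0 \<le> ereal (\<sigma>*\<rho>^2)" using sol_exists by blast
  have Rz: "R z = ereal (Rr z)"
  proof (cases "R z")
    case PInf
    then have "bregman R \<xi>0 z x0 = \<infinity>" unfolding bregman_def x0R by simp
    then have False using z(3) by simp
    then show ?thesis ..
  next
    case MInf then show ?thesis using R_not_minf by simp
  next
    case (real b) then show ?thesis by (simp add: Rr_def)
  qed
  have D: "Rr z - Rr x0 - inner \<xi>0 (z - x0) \<le> \<sigma> * \<rho>^2"
    using z(3) unfolding bregman_def Rz x0R by simp
  have "\<sigma> * (norm (z - x0))^2 \<le> Rr z - Rr x0 - inner \<xi>0 (z - x0)"
    using D_lower_gen[OF Rz, of 0] unfolding x_init \<xi>_init .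
  then have "\<sigma> * (norm (z - x0))^2 \<le> \<sigma> * \<rho>^2" using D by linarith
  then have "(norm (z - x0))^2 \<le> \<rho>^2" using \<sigma>_pos by (simp add: mult_le_cancel_left)
  then have zn: "norm (z - x0) \<le> \<rho>" by (rule power2_le_imp_le) (use \<rho>_pos in simp)
  have "dist x0 z = norm (z - x0)" by (metis dist_commute dist_norm)
  then have "z \<in> B" using \<rho>_pos zn by simp
  then have "sol z" using z(2) unfolding sol_def by blast
  then show ?thesis using z(1) Rz D zn by blast
qed

definition "xb = (SOME z. z \<in> domF \<and> sol z \<and> R z = ereal (Rr z) \<and> Rr z - Rr x0 - inner \<xi>0 (z - x0) \<le> \<sigma> * \<rho>^2
   \<and> norm (z - x0) \<le> \<rho>)"

lemma xb_props: "xb \<in> domF" "sol xb" "R xb = ereal (Rr xb)" "Rr xb - Rr x0 - inner \<xi>0 (xb - x0) \<le> \<sigma> * \<rho>^2"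
   "norm (xb - x0) \<le> \<rho>"
proof -
  have "xb \<in> domF \<and> sol xb \<and> R xb = ereal (Rr xb) \<and> Rr xb - Rr x0 - inner \<xi>0 (xb - x0) \<le> \<sigma> * \<rho>^2
   \<and> norm (xb - x0) \<le> \<rho>" unfolding xb_def by (rule someI_ex[OF xb_ex])
  then show "xb \<in> domF" "sol xb" "R xb = ereal (Rr xb)" "Rr xb - Rr x0 - inner \<xi>0 (xb - x0) \<le> \<sigma> * \<rho>^2"
   "norm (xb - x0) \<le> \<rho>" by blast+
qed

lemma Phi0: "Phi 0 z = - Rr x0 - inner \<xi>0 (z - x0)"
  unfolding Phi_def x_init \<xi>_init by simp

lemma x_in_B: "x n \<in> B"
proof (induction n rule: less_induct)
  case (less n)
  then have "\<forall>k<n. x k \<in> B" by blast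
  from ind[OF xb_props(2) this] have P: "Phi n xb \<le> Phi 0 xb - cc * (\<Sum>k<n. \<alpha> k * (norm (r k))^2)" by blast
  have "0 \<le> cc * (\<Sum>k<n. \<alpha> k * (norm (r k))^2)"
    using cc_pos alpha_nn by (intro mult_nonneg_nonneg sum_nonneg) auto
  then have P': "Phi n xb \<le> Phi 0 xb" using P by linarith
  have "\<sigma> * (norm (xb - x n))^2 \<le> Rr xb - Rr (x n) - inner (\<xi> n) (xb - x n)"
    by (rule D_lower_gen[OF xb_props(3)])
  also have "\<dots> = Rr xb + Phi n xb" unfolding Phi_def by simp
  also have "\<dots> \<le> Rr xb + Phi 0 xb" using P' by simp
  also have "\<dots> \<le> \<sigma> * \<rho>^2" using xb_props(4) unfolding Phi0 by simp
  finally have "(norm (xb - x n))^2 \<le> \<rho>^2" using \<sigma>_pos by simp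
  then have "norm (xb - x n) \<le> \<rho>" by (rule power2_le_imp_le) (use \<rho>_pos in simp)
  moreover have "norm (x0 - xb) \<le> \<rho>" using xb_props(5) by (metis norm_minus_commute)
  moreover have "norm (x0 - x n) \<le> norm (x0 - xb) + norm (xb - x n)"
    using norm_triangle_ineq[of "x0 - xb" "xb - x n"] by simp
  ultimately have "norm (x0 - x n) \<le> 2 * \<rho>" by linarith
  then show ?case by (simp add: dist_norm)
qed

lemma ind_all: "sol z \<Longrightarrow> inner (m n) (x n - z) \<le> gt n \<and> Phi n z \<le> Phi 0 z - cc * (\<Sum>k<n. \<alpha> k * (norm (r k))^2)"
  using ind x_in_B by blast

lemma Phi_step: "sol z \<Longrightarrow> Phi (Suc n) z \<le> Phi n z - cc * (\<alpha> n * (norm (r n))^2)"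
  using step(2)[OF x_in_B _ conjunct1[OF ind_all]] by blast

lemma ar_nn: "0 \<le> \<alpha> n * (norm (r n))^2" using alpha_nn by simp

lemma Phi_dec: "sol z \<Longrightarrow> decseq (\<lambda>n. Phi n z)"
proof (rule decseq_SucI)
  fix n assume "sol z"
  have "0 \<le> cc * (\<alpha> n * (norm (r n))^2)" using cc_pos ar_nn by simp
  then show "Phi (Suc n) z \<le> Phi n z" using Phi_step[OF \<open>sol z\<close>, of n] by linarith
qed

lemma Phi_lower: "- Rr xb \<le> Phi n xb"
proof -
  have "\<sigma> * (norm (xb - x n))^2 \<le> Rr xb - Rr (x n) - inner (\<xi> n) (xb - x n)"
    by (rule D_lower_gen[OF xb_props(3)])
  moreover have "0 \<le> \<sigma> * (norm (xb - x n))^2" using \<sigma>_pos by simp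
  ultimately show ?thesis unfolding Phi_def by simp
qed

lemma summable_ar: "summable (\<lambda>k. \<alpha> k * (norm (r k))^2)"
proof (rule summableI_nonneg_bounded)
  fix n
  have "Phi n xb \<le> Phi 0 xb - cc * (\<Sum>k<n. \<alpha> k * (norm (r k))^2)" using ind_all[OF xb_props(2)] by blast
  then have "cc * (\<Sum>k<n. \<alpha> k * (norm (r k))^2) \<le> Phi 0 xb + Rr xb" using Phi_lower[of n] by linarith
  then show "(\<Sum>k<n. \<alpha> k * (norm (r k))^2) \<le> (Phi 0 xb + Rr xb) / cc"
    using cc_pos by (simp add: le_divide_eq mult.commute)
qed (rule ar_nn)

lemma summable_r2: "summable (\<lambda>k. (norm (r k))^2)"
proof (rule summable_comparison_test[OF _ summable_mult[OF summable_ar, of "1/amin"]])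
  show "\<exists>N. \<forall>n\<ge>N. norm ((norm (r n))^2) \<le> 1/amin * (\<alpha> n * (norm (r n))^2)"
  proof (intro exI allI impI)
    fix n :: nat
    have "amin * (norm (r n))^2 \<le> \<alpha> n * (norm (r n))^2" by (rule alpha_r[OF x_in_B])
    then show "norm ((norm (r n))^2) \<le> 1/amin * (\<alpha> n * (norm (r n))^2)"
      using amin_pos by (simp add: field_simps)
  qed
qed

lemma r_lim: "(\<lambda>k. norm (r k)) \<longlonglongrightarrow> 0"
proof -
  have "(\<lambda>k. (norm (r k))^2) \<longlonglongrightarrow> 0" by (rule summable_LIMSEQ_zero[OF summable_r2])
  then have "(\<lambda>k. sqrt ((norm (r k))^2)) \<longlonglongrightarrow> sqrt 0" by (rule tendsto_real_sqrt)
  then show ?thesis by simp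
qed

end

lemma rec_lim:
  fixes a b :: "nat \<Rightarrow> real" and \<beta> :: real
  assumes a_nn: "\<And>n. 0 \<le> a n" and rec: "\<And>n. a (Suc n) \<le> \<beta> * a n + b n"
    and b0: "0 \<le> \<beta>" and b1: "\<beta> < 1" and blim: "b \<longlonglongrightarrow> 0"
  shows "a \<longlonglongrightarrow> 0"
proof (rule LIMSEQ_I)
  fix e :: real assume e: "0 < e"
  have "0 < (1 - \<beta>) * e / 2" using e b1 by simp
  from LIMSEQ_D[OF blim this] obtain N where N: "\<And>n. n \<ge> N \<Longrightarrow> norm (b n - 0) < (1 - \<beta>) * e / 2" by blast
  have claim: "a (N + j) - e/2 \<le> \<beta>^j * a N" for j
  proof (induction j)
    case 0 then show ?case using e by simp
  next
    case (Suc j)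
    have "b (N + j) \<le> (1 - \<beta>) * e / 2" using N[of "N+j"] by simp
    then have "a (N + Suc j) - e/2 \<le> \<beta> * (a (N + j) - e/2)"
      using rec[of "N+j"] by (simp add: algebra_simps)
    also have "\<dots> \<le> \<beta> * (\<beta>^j * a N)" using Suc.IH b0 by (rule mult_left_mono)
    finally show ?case by simp
  qed
  have "(\<lambda>j. \<beta>^j * a N) \<longlonglongrightarrow> 0 * a N"
    by (intro tendsto_mult tendsto_const LIMSEQ_power_zero) (use b0 b1 in simp)
  then have "\<exists>M. \<forall>j\<ge>M. norm (\<beta>^j * a N - 0) < e/2" using e by (intro LIMSEQ_D) auto
  then obtain M where M0: "\<forall>j\<ge>M. norm (\<beta>^j * a N - 0) < e/2" by blast
  have M: "\<beta>^j * a N < e/2" if "j \<ge> M" for j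
    using M0[rule_format, OF that] by (simp add: abs_less_iff)
  show "\<exists>no. \<forall>n\<ge>no. norm (a n - 0) < e"
  proof (intro exI allI impI)
    fix n assume "n \<ge> N + M"
    define j where "j = n - N"
    have j: "n = N + j" "j \<ge> M" using \<open>n \<ge> N + M\<close> unfolding j_def by auto
    have "a n < e" using claim[of j] M[OF j(2)] j(1) by simp
    then show "norm (a n - 0) < e" using a_nn[of n] by simp
  qed
qed

context alg begin

lemma amax_nn: "0 \<le> amax" unfolding amax_def using \<mu>1_pos by simp

lemma m_norm_rec: "norm (m (Suc n)) \<le> \<beta> * norm (m n) + (amax * Lc) * norm (r n)"
proof -
  have "norm (m (Suc n)) \<le> norm (bt n *\<^sub>R m n) + norm (\<alpha> n *\<^sub>R g n)"
    unfolding m_Suc by (rule norm_triangle_ineq4)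
  also have "norm (bt n *\<^sub>R m n) = bt n * norm (m n)" using bt_nn by simp
  also have "norm (\<alpha> n *\<^sub>R g n) = \<alpha> n * norm (g n)" using alpha_nn by simp
  also have "bt n * norm (m n) \<le> \<beta> * norm (m n)" using bt_le by (intro mult_right_mono) auto
  also have "\<alpha> n * norm (g n) \<le> amax * (Lc * norm (r n))"
    using alpha_le alpha_nn g_normB[OF x_in_B] amax_nn by (intro mult_mono) auto
  finally show ?thesis by (simp add: algebra_simps)
qed

lemma m_lim: "(\<lambda>n. norm (m n)) \<longlonglongrightarrow> 0"
proof (rule rec_lim[where \<beta>=\<beta>])
  show "(\<lambda>n. (amax * Lc) * norm (r n)) \<longlonglongrightarrow> 0"
    using tendsto_mult[OF tendsto_const r_lim, of "amax * Lc"] by simp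
qed (use m_norm_rec \<beta>_range in auto)

definition "tail n = suminf (\<lambda>k. (norm (r k))^2) - (\<Sum>k<n. (norm (r k))^2)"

lemma tail_lim: "tail \<longlonglongrightarrow> 0"
proof -
  have "(\<lambda>n. suminf (\<lambda>k. (norm (r k))^2) - (\<Sum>k<n. (norm (r k))^2)) \<longlonglongrightarrow>
        suminf (\<lambda>k. (norm (r k))^2) - suminf (\<lambda>k. (norm (r k))^2)"
    by (intro tendsto_diff tendsto_const summable_LIMSEQ[OF summable_r2])
  then show ?thesis unfolding tail_def[abs_def] by simp
qed

lemma tail_bound: assumes "n \<le> k" shows "(\<Sum>i\<in>{n..<k}. (norm (r i))^2) \<le> tail n"
proof -
  have "(\<Sum>i\<in>{0..<n}. (norm (r i))^2) + (\<Sum>i\<in>{n..<k}. (norm (r i))^2) = (\<Sum>i\<in>{0..<k}. (norm (r i))^2)"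
    using assms by (intro sum.atLeastLessThan_concat) auto
  moreover have "(\<Sum>i\<in>{0..<k}. (norm (r i))^2) \<le> suminf (\<lambda>k. (norm (r k))^2)"
    by (intro sum_le_suminf summable_r2) auto
  ultimately show ?thesis unfolding tail_def by (simp add: atLeast0LessThan)
qed

lemma cross:
  "(1 - \<beta>) * \<bar>inner (\<xi> (n + j) - \<xi> n) w\<bar> \<le> norm (m n) * norm w
     + (\<Sum>i\<in>{n..<n+j}. \<alpha> i * \<bar>inner (r i) (blinfun_apply (L (x i)) w)\<bar>)"
proof -
  define a where "a i = \<bar>inner (m i) w\<bar>" for i
  define b where "b i = \<alpha> i * \<bar>inner (r i) (blinfun_apply (L (x i)) w)\<bar>" for i
  have rec: "a (Suc i) \<le> \<beta> * a i + b i" for i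
  proof -
    have eq: "inner (m (Suc i)) w = bt i * inner (m i) w - \<alpha> i * inner (r i) (blinfun_apply (L (x i)) w)"
      by (simp add: m_Suc inner_diff_left g_inner)
    have "a (Suc i) \<le> \<bar>bt i * inner (m i) w\<bar> + \<bar>\<alpha> i * inner (r i) (blinfun_apply (L (x i)) w)\<bar>"
      unfolding a_def eq by (rule abs_triangle_ineq4)
    also have "\<bar>bt i * inner (m i) w\<bar> = bt i * a i" using bt_nn by (simp add: a_def abs_mult)
    also have "\<bar>\<alpha> i * inner (r i) (blinfun_apply (L (x i)) w)\<bar> = b i" using alpha_nn by (simp add: b_def abs_mult)
    also have "bt i * a i \<le> \<beta> * a i" using bt_le by (intro mult_right_mono) (auto simp: a_def)
    finally show ?thesis by simp
  qed
  have claim: "(1 - \<beta>) * (\<Sum>i\<in>{n..n+j}. a i) + \<beta> * a (n+j) \<le> a n + (\<Sum>i\<in>{n..<n+j}. b i)" for j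
  proof (induction j)
    case 0 then show ?case by (simp add: algebra_simps)
  next
    case (Suc j)
    have s1: "(\<Sum>i\<in>{n..n + Suc j}. a i) = (\<Sum>i\<in>{n..n+j}. a i) + a (Suc (n+j))" by simp
    have s2: "(\<Sum>i\<in>{n..<n + Suc j}. b i) = (\<Sum>i\<in>{n..<n+j}. b i) + b (n+j)" by simp
    show ?case unfolding s1 s2 using Suc.IH rec[of "n+j"] by (simp add: algebra_simps)
  qed
  have claim2: "\<bar>inner (\<xi> (n + j) - \<xi> n) w\<bar> \<le> (\<Sum>i\<in>{n..n+j}. a i)" for j
  proof (induction j)
    case 0 then show ?case by (simp add: a_def)
  next
    case (Suc j)
    have "inner (\<xi> (n + Suc j) - \<xi> n) w = inner (\<xi> (n + j) - \<xi> n) w + inner (m (Suc (n+j))) w"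
      by (simp add: m_Suc' inner_diff_left)
    then have "\<bar>inner (\<xi> (n + Suc j) - \<xi> n) w\<bar> \<le> \<bar>inner (\<xi> (n + j) - \<xi> n) w\<bar> + a (Suc (n+j))"
      by (simp add: a_def abs_triangle_ineq)
    then show ?case using Suc.IH by simp
  qed
  have a_nn: "0 \<le> a i" for i by (simp add: a_def)
  have "(1 - \<beta>) * \<bar>inner (\<xi> (n + j) - \<xi> n) w\<bar> \<le> (1 - \<beta>) * (\<Sum>i\<in>{n..n+j}. a i)"
    using claim2 \<beta>_range by (intro mult_left_mono) auto
  also have "\<dots> \<le> a n + (\<Sum>i\<in>{n..<n+j}. b i)"
  proof -
    have "0 \<le> \<beta> * a (n+j)" using a_nn[of "n+j"] \<beta>_range by simp
    then show ?thesis using claim[of j] by linarith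
  qed
  also have "a n \<le> norm (m n) * norm w" unfolding a_def by (rule Cauchy_Schwarz_ineq2)
  finally show ?thesis unfolding b_def by simp
qed

lemma term_bound:
  assumes z: "sol z"
  shows "\<bar>inner (r i) (blinfun_apply (L (x i)) (x k - z))\<bar> \<le> (1 + \<eta>) * norm (r i) * (norm (r k) + 2 * norm (r i))"
proof -
  have zB: "z \<in> B" and Fz: "F z = y" using z by (auto simp: sol_def)
  have 1: "norm (blinfun_apply (L (x i)) (x k - x i)) \<le> (1 + \<eta>) * (norm (r k) + norm (r i))"
  proof -
    have "norm (blinfun_apply (L (x i)) (x k - x i)) \<le> (1 + \<eta>) * norm (F (x k) - F (x i))"
      by (rule tcc_norm[OF x_in_B x_in_B])
    also have "F (x k) - F (x i) = r k - r i" by (simp add: r_def)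
    also have "(1 + \<eta>) * norm (r k - r i) \<le> (1 + \<eta>) * (norm (r k) + norm (r i))"
      using \<eta>_range by (intro mult_left_mono norm_triangle_ineq4) auto
    finally show ?thesis .
  qed
  have 2: "norm (blinfun_apply (L (x i)) (z - x i)) \<le> (1 + \<eta>) * norm (r i)"
  proof -
    have "norm (blinfun_apply (L (x i)) (z - x i)) \<le> (1 + \<eta>) * norm (F z - F (x i))"
      by (rule tcc_norm[OF zB x_in_B])
    also have "norm (F z - F (x i)) = norm (r i)" by (simp add: r_def Fz norm_minus_commute)
    finally show ?thesis .
  qed
  have eq: "blinfun_apply (L (x i)) (x k - z) = blinfun_apply (L (x i)) (x k - x i) - blinfun_apply (L (x i)) (z - x i)"
    by (simp add: blinfun.diff_right[symmetric])
  have "norm (blinfun_apply (L (x i)) (x k - z)) \<le> (1 + \<eta>) * (norm (r k) + norm (r i)) + (1 + \<eta>) * norm (r i)"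
    unfolding eq by (rule order_trans[OF norm_triangle_ineq4 add_mono[OF 1 2]])
  also have "\<dots> = (1 + \<eta>) * (norm (r k) + 2 * norm (r i))" by (simp add: algebra_simps)
  finally have n: "norm (blinfun_apply (L (x i)) (x k - z)) \<le> (1 + \<eta>) * (norm (r k) + 2 * norm (r i))" .
  have "\<bar>inner (r i) (blinfun_apply (L (x i)) (x k - z))\<bar> \<le> norm (r i) * norm (blinfun_apply (L (x i)) (x k - z))"
    by (rule Cauchy_Schwarz_ineq2)
  also have "\<dots> \<le> norm (r i) * ((1 + \<eta>) * (norm (r k) + 2 * norm (r i)))"
    using n by (intro mult_left_mono) auto
  finally show ?thesis by (simp add: algebra_simps)
qed

end

context alg begin

lemma norm_xk_xb: "norm (x k - xb) \<le> 4 * \<rho>"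
proof -
  have "dist x0 (x k) \<le> 2 * \<rho>" using x_in_B[of k] by simp
  then have a: "norm (x k - x0) \<le> 2 * \<rho>" by (simp add: dist_norm norm_minus_commute)
  have b: "norm (x0 - xb) \<le> \<rho>" using xb_props(5) by (simp add: norm_minus_commute)
  have "norm (x k - xb) \<le> norm (x k - x0) + norm (x0 - xb)"
    using norm_triangle_ineq[of "x k - x0" "x0 - xb"] by simp
  then show ?thesis using a b \<rho>_pos by linarith
qed

lemma Kineq:
  assumes nk: "n \<le> k"
  shows "(1 - \<beta>) * ((Rr (x k) - Rr (x n) - inner (\<xi> n) (x k - x n)) - (Phi n xb - Phi k xb))
     \<le> 4 * \<rho> * norm (m n) + amax * (1 + \<eta>) * (3 * tail n + real k * (norm (r k))^2)"
proof -
  have id: "(Rr (x k) - Rr (x n) - inner (\<xi> n) (x k - x n)) - (Phi n xb - Phi k xb) = inner (\<xi> k - \<xi> n) (x k - xb)"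
    unfolding Phi_def by (simp add: inner_diff_left inner_diff_right algebra_simps)
  define j where "j = k - n"
  have kj: "k = n + j" using nk unfolding j_def by simp
  have c: "(1 - \<beta>) * \<bar>inner (\<xi> k - \<xi> n) (x k - xb)\<bar> \<le> norm (m n) * norm (x k - xb)
     + (\<Sum>i\<in>{n..<k}. \<alpha> i * \<bar>inner (r i) (blinfun_apply (L (x i)) (x k - xb))\<bar>)"
    using cross[of n j "x k - xb"] unfolding kj[symmetric] .
  have t1: "norm (m n) * norm (x k - xb) \<le> 4 * \<rho> * norm (m n)"
    using norm_xk_xb[of k] by (simp add: mult_left_mono mult.commute)
  have t2: "\<alpha> i * \<bar>inner (r i) (blinfun_apply (L (x i)) (x k - xb))\<bar> \<le> amax * (1 + \<eta>) * (3 * (norm (r i))^2 + (norm (r k))^2)" for i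
  proof -
    have "\<alpha> i * \<bar>inner (r i) (blinfun_apply (L (x i)) (x k - xb))\<bar> \<le> amax * ((1 + \<eta>) * norm (r i) * (norm (r k) + 2 * norm (r i)))"
      using alpha_le[of i] term_bound[OF xb_props(2), of i k] amax_nn by (intro mult_mono) auto
    also have "(1 + \<eta>) * norm (r i) * (norm (r k) + 2 * norm (r i)) \<le> (1 + \<eta>) * (3 * (norm (r i))^2 + (norm (r k))^2)"
    proof -
      have "norm (r i) * norm (r k) \<le> (norm (r i))^2 + (norm (r k))^2"
      proof -
        have "0 \<le> (norm (r i) - norm (r k))^2" by simp
        then have "2 * (norm (r i) * norm (r k)) \<le> (norm (r i))^2 + (norm (r k))^2"
          by (simp add: power2_eq_square algebra_simps)
        moreover have "0 \<le> norm (r i) * norm (r k)" by simp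
        ultimately show ?thesis by linarith
      qed
      then have "norm (r i) * (norm (r k) + 2 * norm (r i)) \<le> 3 * (norm (r i))^2 + (norm (r k))^2"
        by (simp add: power2_eq_square algebra_simps)
      then show ?thesis using \<eta>_range by (simp add: mult.assoc mult_left_mono)
    qed
    then have "amax * ((1 + \<eta>) * norm (r i) * (norm (r k) + 2 * norm (r i))) \<le> amax * ((1 + \<eta>) * (3 * (norm (r i))^2 + (norm (r k))^2))"
      using amax_nn by (rule mult_left_mono)
    finally show ?thesis by (simp add: mult.assoc)
  qed
  have "(\<Sum>i\<in>{n..<k}. \<alpha> i * \<bar>inner (r i) (blinfun_apply (L (x i)) (x k - xb))\<bar>)
      \<le> (\<Sum>i\<in>{n..<k}. amax * (1 + \<eta>) * (3 * (norm (r i))^2 + (norm (r k))^2))"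
    by (rule sum_mono) (rule t2)
  also have "\<dots> = amax * (1 + \<eta>) * (3 * (\<Sum>i\<in>{n..<k}. (norm (r i))^2) + real (k - n) * (norm (r k))^2)"
    by (simp add: sum_distrib_left sum.distrib algebra_simps)
  also have "\<dots> \<le> amax * (1 + \<eta>) * (3 * tail n + real k * (norm (r k))^2)"
  proof -
    have "3 * (\<Sum>i\<in>{n..<k}. (norm (r i))^2) \<le> 3 * tail n" using tail_bound[OF nk] by simp
    moreover have "real (k - n) * (norm (r k))^2 \<le> real k * (norm (r k))^2"
      by (intro mult_right_mono) auto
    ultimately show ?thesis using amax_nn \<eta>_range by (intro mult_left_mono) auto
  qed
  finally have s: "(\<Sum>i\<in>{n..<k}. \<alpha> i * \<bar>inner (r i) (blinfun_apply (L (x i)) (x k - xb))\<bar>)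
      \<le> amax * (1 + \<eta>) * (3 * tail n + real k * (norm (r k))^2)" .
  have "(1 - \<beta>) * inner (\<xi> k - \<xi> n) (x k - xb) \<le> (1 - \<beta>) * \<bar>inner (\<xi> k - \<xi> n) (x k - xb)\<bar>"
    using \<beta>_range by (intro mult_left_mono) auto
  then show ?thesis unfolding id using c t1 s by linarith
qed

definition "Plim = lim (\<lambda>n. Phi n xb)"

lemma Plim: "(\<lambda>n. Phi n xb) \<longlonglongrightarrow> Plim" "Plim \<le> Phi n xb"
proof -
  obtain L where L: "(\<lambda>n. Phi n xb) \<longlonglongrightarrow> L" "\<forall>i. L \<le> Phi i xb"
    using decseq_convergent[OF Phi_dec[OF xb_props(2)], of "- Rr xb"] Phi_lower by blast
  have "Plim = L" unfolding Plim_def using L(1) by (rule limI)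
  then show "(\<lambda>n. Phi n xb) \<longlonglongrightarrow> Plim" "Plim \<le> Phi n xb" using L by auto
qed

definition "Cst = 1 + (4 * \<rho> + 4 * amax * (1 + \<eta>)) / (1 - \<beta>)"

lemma Cst_ge: "Cst \<ge> 1"
proof -
  have "0 \<le> (4 * \<rho> + 4 * amax * (1 + \<eta>)) / (1 - \<beta>)"
    using \<rho>_pos amax_nn \<eta>_range \<beta>_range by (intro divide_nonneg_pos) auto
  then show ?thesis unfolding Cst_def by simp
qed

lemma Kdelta:
  assumes d: "\<delta> > 0"
  shows "\<exists>N0. \<forall>n\<ge>N0. \<forall>k\<ge>n. real k * (norm (r k))^2 \<le> \<delta> \<longrightarrow>
            Rr (x k) - Rr (x n) - inner (\<xi> n) (x k - x n) \<le> Cst * \<delta>"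
proof -
  have e1: "eventually (\<lambda>n. Phi n xb - Plim < \<delta>) sequentially"
  proof -
    have "(\<lambda>n. Phi n xb - Plim) \<longlonglongrightarrow> 0" using LIM_zero[OF Plim(1)] .
    then show ?thesis using d by (rule order_tendstoD(2))
  qed
  have e2: "eventually (\<lambda>n. norm (m n) < \<delta>) sequentially" using m_lim d by (rule order_tendstoD(2))
  have e3: "eventually (\<lambda>n. tail n < \<delta>) sequentially" using tail_lim d by (rule order_tendstoD(2))
  have "eventually (\<lambda>n. Phi n xb - Plim < \<delta> \<and> norm (m n) < \<delta> \<and> tail n < \<delta>) sequentially"
    using e1 e2 e3 by eventually_elim auto
  then obtain N0 where N0: "\<And>n. n \<ge> N0 \<Longrightarrow> Phi n xb - Plim < \<delta> \<and> norm (m n) < \<delta> \<and> tail n < \<delta>"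
    unfolding eventually_sequentially by blast
  show ?thesis
  proof (intro exI allI impI)
    fix n k assume n: "N0 \<le> n" and nk: "n \<le> k" and kg: "real k * (norm (r k))^2 \<le> \<delta>"
    define Dv where "Dv = Rr (x k) - Rr (x n) - inner (\<xi> n) (x k - x n)"
    define K where "K = 4 * \<rho> + 4 * amax * (1 + \<eta>)"
    have K_nn: "0 \<le> K" unfolding K_def using \<rho>_pos amax_nn \<eta>_range by simp
    have P: "Phi n xb - Phi k xb \<le> \<delta>" using N0[OF n] Plim(2)[of k] by linarith
    have "4 * \<rho> * norm (m n) \<le> 4 * \<rho> * \<delta>" using N0[OF n] \<rho>_pos by simp
    moreover have "amax * (1 + \<eta>) * (3 * tail n + real k * (norm (r k))^2) \<le> amax * (1 + \<eta>) * (4 * \<delta>)"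
      using N0[OF n] kg amax_nn \<eta>_range by (intro mult_left_mono) auto
    ultimately have "(1 - \<beta>) * (Dv - (Phi n xb - Phi k xb)) \<le> K * \<delta>"
      using Kineq[OF nk] unfolding Dv_def K_def by (simp add: algebra_simps)
    then have "Dv - (Phi n xb - Phi k xb) \<le> K * \<delta> / (1 - \<beta>)"
      using \<beta>_range by (simp add: le_divide_eq mult.commute)
    moreover have "Cst * \<delta> = \<delta> + K * \<delta> / (1 - \<beta>)" unfolding Cst_def K_def by (simp add: algebra_simps)
    ultimately show "Rr (x k) - Rr (x n) - inner (\<xi> n) (x k - x n) \<le> Cst * \<delta>"
      using P unfolding Dv_def by linarith
  qed
qed

lemma good_k:
  assumes d: "\<delta> > 0"
  shows "\<exists>k\<ge>K. real k * (norm (r k))^2 \<le> \<delta>"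
proof (rule ccontr)
  assume nt: "\<not> ?thesis"
  have big: "\<delta> < real k * (norm (r k))^2" if "k \<ge> K" for k using nt that not_le by blast
  have "summable (\<lambda>k. inverse (real k))"
  proof (rule summable_comparison_test[OF _ summable_mult[OF summable_r2, of "1/\<delta>"]])
    show "\<exists>N. \<forall>n\<ge>N. norm (inverse (real n)) \<le> 1/\<delta> * (norm (r n))^2"
    proof (intro exI allI impI)
      fix n assume "n \<ge> max K 1"
      then have nK: "n \<ge> K" and n1: "real n \<ge> 1" by auto
      have "\<delta> < real n * (norm (r n))^2" by (rule big[OF nK])
      then have "\<delta> * inverse (real n) \<le> (norm (r n))^2"
        using n1 by (simp add: field_simps)
      then show "norm (inverse (real n)) \<le> 1/\<delta> * (norm (r n))^2"
        using d n1 by (simp add: field_simps)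
    qed
  qed
  then show False using not_summable_harmonic[where 'a=real] by simp
qed

lemma x_cauchy: "Cauchy x"
proof (rule metric_CauchyI)
  fix e :: real assume e: "0 < e"
  define \<delta> where "\<delta> = \<sigma> * e^2 / (8 * Cst)"
  have Cpos: "Cst > 0" using Cst_ge by simp
  have d: "\<delta> > 0" unfolding \<delta>_def using \<sigma>_pos e Cpos by simp
  have Cd: "Cst * \<delta> = \<sigma> * (e^2 / 8)" unfolding \<delta>_def using Cpos by (simp add: field_simps)
  obtain N0 where N0: "\<And>n k. n \<ge> N0 \<Longrightarrow> k \<ge> n \<Longrightarrow> real k * (norm (r k))^2 \<le> \<delta> \<Longrightarrow>
            Rr (x k) - Rr (x n) - inner (\<xi> n) (x k - x n) \<le> Cst * \<delta>"
    using Kdelta[OF d] by blast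
  have close: "norm (x k - x n) < e/2" if "n \<ge> N0" "k \<ge> n" "real k * (norm (r k))^2 \<le> \<delta>" for n k
  proof -
    have "\<sigma> * (norm (x k - x n))^2 \<le> \<sigma> * (e^2 / 8)" using D_lower[of k n] N0[OF that] Cd by linarith
    then have "(norm (x k - x n))^2 \<le> e^2/8" using \<sigma>_pos by simp
    also have "\<dots> < (e/2)^2" using e by (simp add: power2_eq_square)
    finally show ?thesis by (rule power_less_imp_less_base) (use e in simp)
  qed
  show "\<exists>M. \<forall>p\<ge>M. \<forall>q\<ge>M. dist (x p) (x q) < e"
  proof (intro exI allI impI)
    fix p q assume p: "p \<ge> N0" and q: "q \<ge> N0"
    obtain k where k: "k \<ge> max p q" "real k * (norm (r k))^2 \<le> \<delta>" using good_k[OF d] by blast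
    have "norm (x k - x p) < e/2" using close[OF p _ k(2)] k(1) by simp
    moreover have "norm (x k - x q) < e/2" using close[OF q _ k(2)] k(1) by simp
    moreover have "dist (x p) (x q) \<le> norm (x k - x p) + norm (x k - x q)"
      using norm_triangle_ineq[of "x p - x k" "x k - x q"] by (simp add: dist_norm norm_minus_commute)
    ultimately show "dist (x p) (x q) < e" by linarith
  qed
qed

end

context alg begin

definition "xs = lim x"

lemma x_lim: "x \<longlonglongrightarrow> xs"
  using x_cauchy unfolding xs_def by (simp add: Cauchy_convergent_iff convergent_LIMSEQ_iff)

lemma xs_B: "xs \<in> B"
  by (rule closed_sequentially[OF closed_cball x_in_B x_lim])

lemma xs_sol: "xs \<in> domF \<and> F xs = y"
proof (rule F_wclosed)
  show "\<forall>n. x n \<in> domF" using x_in_B ball_domF by blast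
  show "weak_conv x xs" unfolding weak_conv_def
    by (intro allI tendsto_inner x_lim tendsto_const)
  have "r \<longlonglongrightarrow> 0" using r_lim by (simp add: tendsto_norm_zero_iff)
  then have "(\<lambda>n. r n + y) \<longlonglongrightarrow> 0 + y" by (intro tendsto_add tendsto_const)
  then show "(\<lambda>n. F (x n)) \<longlonglongrightarrow> y" by (simp add: r_def)
qed

lemma G:
  assumes d: "\<delta> > 0"
  shows "\<exists>N0. \<forall>n\<ge>N0. R xs \<le> ereal (Rr (x n) + inner (\<xi> n) (xs - x n) + Cst * \<delta>)"
proof -
  obtain N0 where N0: "\<And>n k. n \<ge> N0 \<Longrightarrow> k \<ge> n \<Longrightarrow> real k * (norm (r k))^2 \<le> \<delta> \<Longrightarrow>
            Rr (x k) - Rr (x n) - inner (\<xi> n) (x k - x n) \<le> Cst * \<delta>"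
    using Kdelta[OF d] by blast
  show ?thesis
  proof (intro exI allI impI)
    fix n assume n: "n \<ge> N0"
    define \<psi> where "\<psi> j = (SOME k. k \<ge> n + j \<and> real k * (norm (r k))^2 \<le> \<delta>)" for j
    have \<psi>: "\<psi> j \<ge> n + j \<and> real (\<psi> j) * (norm (r (\<psi> j)))^2 \<le> \<delta>" for j
      unfolding \<psi>_def by (rule someI_ex) (use good_k[OF d, of "n + j"] in blast)
    have \<psi>lim: "filterlim \<psi> at_top sequentially"
    proof -
      have "\<forall>j. j \<le> \<psi> j" using \<psi> by (meson le_add2 order_trans)
      then show ?thesis by (rule filterlim_at_top_mono[OF filterlim_ident always_eventually])
    qed
    have x\<psi>: "(\<lambda>j. x (\<psi> j)) \<longlonglongrightarrow> xs" by (rule filterlim_compose[OF x_lim \<psi>lim])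
    have lsc: "R xs \<le> liminf (\<lambda>j. R (x (\<psi> j)))"
      using R_lsc x\<psi> unfolding lsc_fun_def by blast
    define h where "h j = Rr (x n) + inner (\<xi> n) (x (\<psi> j) - x n) + Cst * \<delta>" for j
    have bnd: "R (x (\<psi> j)) \<le> ereal (h j)" for j
    proof -
      have "Rr (x (\<psi> j)) - Rr (x n) - inner (\<xi> n) (x (\<psi> j) - x n) \<le> Cst * \<delta>"
        using N0[OF n] \<psi>[of j] by auto
      then show ?thesis unfolding xR h_def by simp
    qed
    have hlim: "h \<longlonglongrightarrow> Rr (x n) + inner (\<xi> n) (xs - x n) + Cst * \<delta>"
      unfolding h_def[abs_def] by (intro tendsto_intros x\<psi>)
    have "liminf (\<lambda>j. R (x (\<psi> j))) \<le> liminf (\<lambda>j. ereal (h j))"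
      by (rule Liminf_mono) (use bnd in \<open>auto intro: eventuallyI\<close>)
    also have "liminf (\<lambda>j. ereal (h j)) = ereal (Rr (x n) + inner (\<xi> n) (xs - x n) + Cst * \<delta>)"
      by (rule lim_imp_Liminf) (use hlim in auto)
    finally show "R xs \<le> ereal (Rr (x n) + inner (\<xi> n) (xs - x n) + Cst * \<delta>)" using lsc by simp
  qed
qed

lemma xs_R: "R xs = ereal (Rr xs)"
proof -
  obtain N0 where "\<forall>n\<ge>N0. R xs \<le> ereal (Rr (x n) + inner (\<xi> n) (xs - x n) + Cst * 1)"
    using G[of 1] by auto
  then have "R xs \<le> ereal (Rr (x N0) + inner (\<xi> N0) (xs - x N0) + Cst * 1)" by blast
  then have "R xs \<noteq> \<infinity>" by auto
  then show ?thesis using R_not_minf[of xs] unfolding Rr_def by (cases "R xs") auto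
qed

definition "Ds n = Rr xs - Rr (x n) - inner (\<xi> n) (xs - x n)"

lemma Ds_nn: "\<sigma> * (norm (xs - x n))^2 \<le> Ds n"
  unfolding Ds_def by (rule D_lower_gen[OF xs_R])

lemma Ds_lim: "Ds \<longlonglongrightarrow> 0"
proof (rule LIMSEQ_I)
  fix e :: real assume e: "0 < e"
  have Cpos: "Cst > 0" using Cst_ge by simp
  define \<delta> where "\<delta> = e / (2 * Cst)"
  have d: "\<delta> > 0" unfolding \<delta>_def using e Cpos by simp
  obtain N0 where N0: "\<forall>n\<ge>N0. R xs \<le> ereal (Rr (x n) + inner (\<xi> n) (xs - x n) + Cst * \<delta>)"
    using G[OF d] by blast
  have Cd: "Cst * \<delta> = e / 2" unfolding \<delta>_def using Cpos by simp
  show "\<exists>no. \<forall>n\<ge>no. norm (Ds n - 0) < e"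
  proof (intro exI allI impI)
    fix n assume "n \<ge> N0"
    then have "Rr xs \<le> Rr (x n) + inner (\<xi> n) (xs - x n) + Cst * \<delta>" using N0 xs_R by (metis ereal_less_eq(3))
    then have "Ds n \<le> e/2" unfolding Ds_def Cd by simp
    moreover have "0 \<le> Ds n" using Ds_nn[of n] \<sigma>_pos by (metis mult_nonneg_nonneg less_imp_le zero_le_power2 order_trans)
    ultimately show "norm (Ds n - 0) < e" using e by simp
  qed
qed

lemma breg_lim: "(\<lambda>n. bregman R (\<xi> n) xs (x n)) \<longlonglongrightarrow> 0"
proof -
  have "bregman R (\<xi> n) xs (x n) = ereal (Ds n)" for n
    unfolding bregman_def Ds_def xs_R xR by simp
  moreover have "(\<lambda>n. ereal (Ds n)) \<longlonglongrightarrow> ereal 0" using Ds_lim by (rule tendsto_ereal)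
  ultimately show ?thesis by (simp add: zero_ereal_def)
qed

lemma norm_lim: "(\<lambda>n. norm (x n - xs)) \<longlonglongrightarrow> 0"
  using LIM_zero[OF x_lim] by (simp add: tendsto_norm_zero_iff)

lemma orth:
  assumes ker: "\<forall>u\<in>B. {h. blinfun_apply (L xd) h = 0} \<subseteq> {h. blinfun_apply (L u) h = 0}"
    and h: "blinfun_apply (L xd) h = 0"
  shows "inner (m n) h = 0 \<and> inner (\<xi> n - \<xi>0) h = 0"
proof (induction n)
  case 0 then show ?case using m0 \<xi>_init by simp
next
  case (Suc n)
  have "blinfun_apply (L (x n)) h = 0" using ker x_in_B[of n] h by blast
  then have g0: "inner (g n) h = 0" by (simp add: g_inner)
  have m1: "inner (m (Suc n)) h = 0" using Suc.IH g0 by (simp add: m_Suc inner_diff_left)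
  have "\<xi> (Suc n) - \<xi>0 = (\<xi> n - \<xi>0) + m (Suc n)" by (simp add: m_Suc')
  then have "inner (\<xi> (Suc n) - \<xi>0) h = 0" using Suc.IH m1 by (simp add: inner_add_left inner_diff_left)
  then show ?case using m1 by simp
qed

lemma uniq:
  assumes xd: "xd \<in> domF" "F xd = y"
    and minD: "\<forall>z\<in>domF. F z = y \<longrightarrow> bregman R \<xi>0 xd x0 \<le> bregman R \<xi>0 z x0"
    and ker: "\<forall>u\<in>B. {h. blinfun_apply (L xd) h = 0} \<subseteq> {h. blinfun_apply (L u) h = 0}"
  shows "xs = xd"
proof -
  have bxb: "bregman R \<xi>0 xb x0 = ereal (Rr xb - Rr x0 - inner \<xi>0 (xb - x0))"
    unfolding bregman_def xb_props(3) x0R by simp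
  have le1: "bregman R \<xi>0 xd x0 \<le> ereal (\<sigma> * \<rho>^2)"
    using minD xb_props(1,2,4) bxb unfolding sol_def by (metis ereal_less_eq(3) order_trans)
  have Rxd: "R xd = ereal (Rr xd)"
  proof (cases "R xd")
    case PInf
    then have "bregman R \<xi>0 xd x0 = \<infinity>" unfolding bregman_def x0R by simp
    then have False using le1 by simp
    then show ?thesis ..
  next
    case MInf then show ?thesis using R_not_minf by simp
  next
    case (real b) then show ?thesis by (simp add: Rr_def)
  qed
  have Dd: "Rr xd - Rr x0 - inner \<xi>0 (xd - x0) \<le> \<sigma> * \<rho>^2"
    using le1 unfolding bregman_def Rxd x0R by simp
  have "\<sigma> * (norm (xd - x0))^2 \<le> Rr xd - Rr x0 - inner \<xi>0 (xd - x0)"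
    using D_lower_gen[OF Rxd, of 0] unfolding x_init \<xi>_init .
  then have "\<sigma> * (norm (xd - x0))^2 \<le> \<sigma> * \<rho>^2" using Dd by linarith
  then have "(norm (xd - x0))^2 \<le> \<rho>^2" using \<sigma>_pos by (simp add: mult_le_cancel_left)
  then have zn: "norm (xd - x0) \<le> \<rho>" by (rule power2_le_imp_le) (use \<rho>_pos in simp)
  have "dist x0 xd = norm (xd - x0)" by (metis dist_commute dist_norm)
  then have xdB: "xd \<in> B" using \<rho>_pos zn by simp
  have "norm (F xs - F xd - blinfun_apply (L xd) (xs - xd)) \<le> \<eta> * norm (F xs - F xd)"
    by (rule tcc[OF xs_B xdB])
  then have Lh: "blinfun_apply (L xd) (xs - xd) = 0" using xs_sol xd(2) by simp
  have orth': "inner (\<xi> n - \<xi>0) (xs - xd) = 0" for n using orth[OF ker Lh] by blast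
  have bxs: "bregman R \<xi>0 xs x0 = ereal (Rr xs - Rr x0 - inner \<xi>0 (xs - x0))"
    unfolding bregman_def xs_R x0R by simp
  have bxd: "bregman R \<xi>0 xd x0 = ereal (Rr xd - Rr x0 - inner \<xi>0 (xd - x0))"
    unfolding bregman_def Rxd x0R by simp
  have mn: "Rr xd - Rr x0 - inner \<xi>0 (xd - x0) \<le> Rr xs - Rr x0 - inner \<xi>0 (xs - x0)"
    using minD xs_sol bxs bxd by fastforce
  have bound: "norm (x n - xd) \<le> sqrt (Ds n / \<sigma>)" for n
  proof -
    have a: "\<sigma> * (norm (xd - x n))^2 \<le> Rr xd - Rr (x n) - inner (\<xi> n) (xd - x n)"
      by (rule D_lower_gen[OF Rxd])
    have "Rr xd - Rr (x n) - inner (\<xi> n) (xd - x n) - Ds n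
        = (Rr xd - Rr x0 - inner \<xi>0 (xd - x0)) - (Rr xs - Rr x0 - inner \<xi>0 (xs - x0)) + inner (\<xi> n - \<xi>0) (xs - xd)"
      unfolding Ds_def by (simp add: inner_diff_left inner_diff_right algebra_simps)
    then have "Rr xd - Rr (x n) - inner (\<xi> n) (xd - x n) \<le> Ds n" using mn orth'[of n] by linarith
    then have "\<sigma> * (norm (x n - xd))^2 \<le> Ds n" using a by (simp add: norm_minus_commute)
    then have "(norm (x n - xd))^2 \<le> Ds n / \<sigma>" using \<sigma>_pos by (simp add: le_divide_eq mult.commute)
    then show ?thesis by (rule real_le_rsqrt)
  qed
  have "(\<lambda>n. sqrt (Ds n / \<sigma>)) \<longlonglongrightarrow> sqrt (0 / \<sigma>)"
    by (intro tendsto_intros Ds_lim) (use \<sigma>_pos in auto)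
  then have "(\<lambda>n. sqrt (Ds n / \<sigma>)) \<longlonglongrightarrow> 0" by simp
  then have "(\<lambda>n. x n - xd) \<longlonglongrightarrow> 0"
    by (rule Lim_null_comparison[rotated]) (use bound in \<open>auto intro: eventuallyI\<close>)
  then have "x \<longlonglongrightarrow> xd" by (simp add: LIM_zero_iff)
  then show ?thesis using x_lim by (rule LIMSEQ_unique[rotated])
qed

lemma main:
  "\<exists>xs. xs \<in> domF \<and> F xs = y \<and> xs \<in> cball x0 (2 * \<rho>) \<inter> effdom R
           \<and> (\<lambda>n. bregman R (\<xi> n) xs (x n)) \<longlonglongrightarrow> 0
           \<and> (\<lambda>n. norm (x n - xs)) \<longlonglongrightarrow> 0
           \<and> (\<forall>xd. (xd \<in> domF \<and> F xd = y
                     \<and> (\<forall>z\<in>domF. F z = y \<longrightarrow> bregman R \<xi>0 xd x0 \<le> bregman R \<xi>0 z x0)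
                     \<and> (\<forall>u\<in>cball x0 (2 * \<rho>). {h. L xd h = 0} \<subseteq> {h. L u h = 0}))
                  \<longrightarrow> xs = xd)"
proof (intro exI conjI allI impI)
  show "xs \<in> domF" "F xs = y" using xs_sol by auto
  show "xs \<in> cball x0 (2 * \<rho>) \<inter> effdom R" using xs_B xs_R by (simp add: effdom_def)
  show "(\<lambda>n. bregman R (\<xi> n) xs (x n)) \<longlonglongrightarrow> 0" by (rule breg_lim)
  show "(\<lambda>n. norm (x n - xs)) \<longlonglongrightarrow> 0" by (rule norm_lim)
  fix xd assume "xd \<in> domF \<and> F xd = y
                     \<and> (\<forall>z\<in>domF. F z = y \<longrightarrow> bregman R \<xi>0 xd x0 \<le> bregman R \<xi>0 z x0)
                     \<and> (\<forall>u\<in>cball x0 (2 * \<rho>). {h. L xd h = 0} \<subseteq> {h. L u h = 0})"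
  then show "xs = xd" using uniq by blast
qed

end

theorem mainTheorem7:
  fixes R :: "'a::{real_inner,complete_space} \<Rightarrow> ereal"
    and F :: "'a \<Rightarrow> 'b::{real_inner,complete_space}"
    and domF :: "'a set"
    and y :: 'b
    and L :: "'a \<Rightarrow> ('a \<Rightarrow>\<^sub>L 'b)"
    and \<sigma> \<rho> \<eta> Lc \<mu>0 \<mu>1 \<beta> :: real
    and x0 \<xi>0 :: 'a
    and adaptive :: bool
    and \<xi> x m g :: "nat \<Rightarrow> 'a"
    and r :: "nat \<Rightarrow> 'b"
    and \<alpha> bt gt :: "nat \<Rightarrow> real"
  assumes R_proper: "proper_fun R"
    and R_lsc: "lsc_fun R"
    and \<sigma>_pos: "\<sigma> > 0"
    and R_sconv: "strongly_convex R \<sigma>"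
    (* (b) *)
    and \<rho>_pos: "\<rho> > 0"
    and \<xi>0_sub: "\<xi>0 \<in> subdiff R x0"
    and ball_domF: "cball x0 (2 * \<rho>) \<subseteq> domF"
    and sol_exists: "\<exists>xb\<in>domF. F xb = y \<and> bregman R \<xi>0 xb x0 \<le> ereal (\<sigma> * \<rho>\<^sup>2)"
    (* (c) weak closedness *)
    and F_wclosed: "\<And>s u v. (\<forall>n. s n \<in> domF) \<Longrightarrow> weak_conv s u \<Longrightarrow>
                       (\<lambda>n. F (s n)) \<longlonglongrightarrow> v \<Longrightarrow> u \<in> domF \<and> F u = v"
    (* (d) *)
    and L_cont: "continuous_on (cball x0 (2 * \<rho>)) L"
    and \<eta>_range: "0 \<le> \<eta>" "\<eta> < 1"
    and tcc: "\<And>u ub. u \<in> cball x0 (2 * \<rho>) \<Longrightarrow> ub \<in> cball x0 (2 * \<rho>) \<Longrightarrow>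
               norm (F u - F ub - blinfun_apply (L ub) (u - ub)) \<le> \<eta> * norm (F u - F ub)"
    and Lc_pos: "Lc > 0"
    and L_bound: "\<And>u. u \<in> cball x0 (2 * \<rho>) \<Longrightarrow> norm (L u) \<le> Lc"
    (* parameters of Theorem *)
    and \<mu>0_range: "0 < \<mu>0" "\<mu>0 < 4 * \<sigma> * (1 - \<eta>)"
    and \<mu>1_pos: "\<mu>1 > 0"
    and \<beta>_range: "0 < \<beta>" "\<beta> < 1"
    (* Algorithm 2 (exact data) *)
    and x_init: "x 0 = x0"
    and \<xi>_init: "\<xi> 0 = \<xi>0"
    and x_grad: "\<And>n. is_grad_conj R (\<xi> n) (x n)"
    and r_def: "\<And>n. r n = F (x n) - y"
    and g_def: "\<And>n. g n = adjoint (blinfun_apply (L (x n))) (r n)"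
    and \<alpha>_def: "\<And>n. \<alpha> n =
          (if adaptive then
             (if r n = 0 then 0
              else if g n = 0 then \<mu>1
              else min (\<mu>0 * (norm (r n))\<^sup>2 / (norm (g n))\<^sup>2) \<mu>1)
           else \<mu>0 / Lc\<^sup>2)"
    and m_def: "\<And>n. m n = (if n = 0 then \<xi> 0 - \<xi>0 else \<xi> n - \<xi> (n - 1))"
    and gt_0: "gt 0 = 0"
    and gt_Suc: "\<And>n. gt (Suc n) = inner (m (Suc n)) (x (Suc n) - x n)
                   - (1 - \<eta>) * \<alpha> n * (norm (r n))\<^sup>2 + bt n * gt n"
    and bt_def: "\<And>n. bt n = (if m n = 0 then 0
                   else min (max 0 ((\<alpha> n * inner (g n) (m n) - 2 * \<sigma> * gt n) / (norm (m n))\<^sup>2)) \<beta>)"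
    and \<xi>_Suc: "\<And>n. \<xi> (Suc n) = \<xi> n - \<alpha> n *\<^sub>R g n + bt n *\<^sub>R m n"
  shows "\<exists>xs. xs \<in> domF \<and> F xs = y \<and> xs \<in> cball x0 (2 * \<rho>) \<inter> effdom R
           \<and> (\<lambda>n. bregman R (\<xi> n) xs (x n)) \<longlonglongrightarrow> 0
           \<and> (\<lambda>n. norm (x n - xs)) \<longlonglongrightarrow> 0
           \<and> (\<forall>xd. (xd \<in> domF \<and> F xd = y
                     \<and> (\<forall>z\<in>domF. F z = y \<longrightarrow> bregman R \<xi>0 xd x0 \<le> bregman R \<xi>0 z x0)
                     \<and> (\<forall>u\<in>cball x0 (2 * \<rho>). {h. L xd h = 0} \<subseteq> {h. L u h = 0}))
                  \<longrightarrow> xs = xd)"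
proof -
  interpret alg R F domF y L \<sigma> \<rho> \<eta> Lc \<mu>0 \<mu>1 \<beta> x0 \<xi>0 adaptive \<xi> x m g r \<alpha> bt gt
    by (rule alg.intro) (fact assms)+
  show ?thesis by (rule main)
qed

end
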